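(* Let $F:\mathbb{R}^n\to\mathbb{R}$ be a convex differentiable function with a minimizer $x_*$, let $\xi^{(1)},\dots,\xi^{(T)}$ be i.i.d. random variables, let $\mu_x,\mu_y\in[0,1)$ be fixed, and let $z^{(1)},\dots,z^{(T)}$ be (random) iterates produced by a base optimizer, with $x^{(1)}=z^{(1)}$, $y^{(t)}=\mu_y x^{(t)}+(1-\mu_y)z^{(t)}$, $x^{(t+1)}=\mu_x x^{(t)}+(1-\mu_x)z^{(t+1)}$, and $\bar{x}^{(T)}=\frac1T\sum_{t=1}^T x^{(t)}$. Assume the base optimizer satisfies the regret guarantee $\sum_{t=1}^T\mathbb{E}[\langle\nabla F(y^{(t)}),z^{(t)}-x_*\rangle]=\mathcal{O}(\sqrt{T})$. Then $$\mathbb{E}[F(\bar{x}^{(T)})-F(x_* )]=\mathcal{O}\Big(\frac{1}{\sqrt T}\Big).$$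
   Context: This is the Generalized Primal Averaging (GPA) framework applied on top of an arbitrary base optimizer generating $z^{(t)}$; $\mathbb{E}[F(x^{(1)})-F(x_* )]$ is assumed finite and $\mu_x,\mu_y$ do not depend on $T$. *)

theory Defs
  imports "HOL-Probability.Probability" "HOL-Library.Landau_Symbols"
begin

text \<open>Generalized Primal Averaging, with the paper's 1-based indexing.
  The base iterates are z 1, z 2, ...; x 1 = z 1 and
  x (t+1) = mu_x x t + (1 - mu_x) z (t+1).  The value at index 0 is a dummy.\<close>

fun gpa_x :: "real \<Rightarrow> (nat \<Rightarrow> 'v::real_vector) \<Rightarrow> nat \<Rightarrow> 'v" where
  "gpa_x mu z 0 = z 1"
| "gpa_x mu z (Suc 0) = z 1"
| "gpa_x mu z (Suc (Suc t)) = mu *\<^sub>R gpa_x mu z (Suc t) + (1 - mu) *\<^sub>R z (Suc (Suc t))"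

definition gpa_y :: "real \<Rightarrow> real \<Rightarrow> (nat \<Rightarrow> 'v::real_vector) \<Rightarrow> nat \<Rightarrow> 'v" where
  "gpa_y mux muy z t = muy *\<^sub>R gpa_x mux z t + (1 - muy) *\<^sub>R z t"

definition gpa_xbar :: "real \<Rightarrow> (nat \<Rightarrow> 'v::real_vector) \<Rightarrow> nat \<Rightarrow> 'v" where
  "gpa_xbar mu z T = (1 / real T) *\<^sub>R (\<Sum>t = 1..T. gpa_x mu z t)"

end

theory Submission
  imports Defs
begin

lemma tangent_ineq:
  fixes F :: "'v::real_inner \<Rightarrow> real"
  assumes cv: "convex_on UNIV F"
    and d: "\<And>x. (F has_derivative (\<lambda>h. g x \<bullet> h)) (at x)"
  shows "F y \<ge> F x + g x \<bullet> (y - x)"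
proof -
  define h where "h = (\<lambda>s::real. F (x + s *\<^sub>R (y - x)))"
  have hc: "convex_on UNIV h"
    unfolding h_def
  proof (rule convex_onI)
    fix t u v :: real assume t: "0 < t" "t < 1"
    have e: "x + ((1 - t) *\<^sub>R u + t *\<^sub>R v) *\<^sub>R (y - x) = (1 - t) *\<^sub>R (x + u *\<^sub>R (y - x)) + t *\<^sub>R (x + v *\<^sub>R (y - x))"
      by (simp add: algebra_simps)
    show "F (x + ((1 - t) *\<^sub>R u + t *\<^sub>R v) *\<^sub>R (y - x)) \<le> (1 - t) * F (x + u *\<^sub>R (y - x)) + t * F (x + v *\<^sub>R (y - x))"
      unfolding e using convex_onD[OF cv] t by simp
  qed simp
  have "((\<lambda>s. x + s *\<^sub>R (y - x)) has_derivative (\<lambda>s. s *\<^sub>R (y - x))) (at 0)"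
    by (auto intro!: derivative_eq_intros)
  from has_derivative_compose[OF this d[of "x + 0 *\<^sub>R (y - x)"]]
  have "(h has_derivative (\<lambda>s. g x \<bullet> (s *\<^sub>R (y - x)))) (at 0)"
    by (simp add: h_def o_def)
  hence "(h has_field_derivative (g x \<bullet> (y - x))) (at 0)"
    unfolding has_field_derivative_def by (simp add: mult.commute[of _ "g x \<bullet> (y - x)"])
  hence "h 1 - h 0 \<ge> (g x \<bullet> (y - x)) * (1 - 0)"
    by (intro convex_on_imp_above_tangent[OF hc]) auto
  thus ?thesis by (simp add: h_def)
qed

lemma step_ineq:
  fixes F :: "'v::real_inner \<Rightarrow> real" and zz :: "nat \<Rightarrow> 'v"
  assumes cv: "convex_on UNIV F"
    and tg: "\<And>x y. F y \<ge> F x + g x \<bullet> (y - x)"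
    and m: "0 \<le> mux" "mux < 1" "0 \<le> muy" "muy < 1"
    and t: "t \<ge> 1"
  shows "(1 - mux) * (g (gpa_y mux muy zz t) \<bullet> (zz t - xs))
     \<ge> (F (gpa_x mux zz t) - F xs) - mux * (F (gpa_x mux zz (t - 1)) - F xs)"
proof (cases "t = 1")
  case True
  have y1: "gpa_y mux muy zz 1 = zz 1" by (simp add: gpa_y_def algebra_simps)
  have "g (zz 1) \<bullet> (zz 1 - xs) \<ge> F (zz 1) - F xs" using tg[of "zz 1" xs]
    by (simp add: inner_diff_right)
  hence "(1 - mux) * (g (zz 1) \<bullet> (zz 1 - xs)) \<ge> (1 - mux) * (F (zz 1) - F xs)"
    using m by (intro mult_left_mono) auto
  thus ?thesis using True y1 by (simp add: algebra_simps)
next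
  case False
  then obtain k where k: "t = Suc (Suc k)" using t by (cases t; cases "t - 1") auto
  define xp where "xp = gpa_x mux zz (Suc k)"
  define zt where "zt = zz t"
  define xt where "xt = gpa_x mux zz t"
  define y where "y = gpa_y mux muy zz t"
  have xt: "xt = mux *\<^sub>R xp + (1 - mux) *\<^sub>R zt" by (simp add: xt_def xp_def zt_def k)
  have y: "y = muy *\<^sub>R xt + (1 - muy) *\<^sub>R zt" by (simp add: y_def gpa_y_def xt_def zt_def)
  have tm1: "gpa_x mux zz (t - 1) = xp" by (simp add: k xp_def)
  define D where "D = 1 - mux * muy"
  have D: "D > 0" using m unfolding D_def
    by (smt (verit) mult_less_cancel_right1 mult_nonneg_nonneg mult_left_le_one_le)
  have mD: "mux * muy \<le> mux" using m mult_left_mono[of muy 1 mux] by simp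
  define lam where "lam = (1 - mux) / D"
  have lam: "0 \<le> lam" "lam \<le> 1" using D m mD by (auto simp: lam_def D_def)
  have xtl: "xt = (1 - lam) *\<^sub>R xp + lam *\<^sub>R y"
  proof -
    have y2: "y = (mux * muy) *\<^sub>R xp + D *\<^sub>R zt" by (simp add: y xt D_def algebra_simps)
    have lD: "lam * D = 1 - mux" using D by (simp add: lam_def)
    have "(1 - lam) *\<^sub>R xp + lam *\<^sub>R y = (1 - lam * D) *\<^sub>R xp + (lam * D) *\<^sub>R zt"
      by (simp add: y2 D_def algebra_simps)
    thus ?thesis unfolding lD xt by simp
  qed
  have iii: "F xt \<le> (1 - lam) * F xp + lam * F y"
    unfolding xtl using convex_onD[OF cv, of lam xp y] lam by simp
  have lD: "lam * D = 1 - mux" using D by (simp add: lam_def)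
  have "D * F xt \<le> D * ((1 - lam) * F xp + lam * F y)" using iii D by (intro mult_left_mono) auto
  also have "\<dots> = (D - lam * D) * F xp + (lam * D) * F y" by (simp add: algebra_simps)
  finally have iii1: "D * F xt \<le> (D - (1 - mux)) * F xp + (1 - mux) * F y" unfolding lD .
  have iii0: "D * F xt \<le> (mux - mux * muy) * F xp + (1 - mux) * F y" using iii1 unfolding D_def by simp
  have iii': "D * (F xt - F xs) \<le> mux * (1 - muy) * (F xp - F xs) + (1 - mux) * (F y - F xs)"
    using iii0 unfolding D_def by (simp add: algebra_simps)
  have zid: "D *\<^sub>R (zt - xs) = D *\<^sub>R (y - xs) + (mux * muy) *\<^sub>R (y - xp)"
    unfolding y xt D_def by (simp add: algebra_simps)
  have i: "g y \<bullet> (y - xs) \<ge> F y - F xs" using tg[of y xs] by (simp add: inner_diff_right)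
  have ii: "g y \<bullet> (y - xp) \<ge> F y - F xp" using tg[of y xp] by (simp add: inner_diff_right)
  have "D * (g y \<bullet> (zt - xs)) = D * (g y \<bullet> (y - xs)) + (mux * muy) * (g y \<bullet> (y - xp))"
    using arg_cong[OF zid, of "\<lambda>v. g y \<bullet> v"] by (simp add: inner_add_right)
  also have "\<dots> \<ge> D * (F y - F xs) + (mux * muy) * (F y - F xp)"
    using i ii D m by (intro add_mono mult_left_mono) auto
  finally have r: "D * (g y \<bullet> (zt - xs)) \<ge> D * (F y - F xs) + (mux * muy) * (F y - F xp)" .
  have "D * ((1 - mux) * (g y \<bullet> (zt - xs))) \<ge> D * ((F xt - F xs) - mux * (F xp - F xs))"
  proof -
    have "(1 - mux) * (D * (g y \<bullet> (zt - xs))) \<ge> (1 - mux) * (D * (F y - F xs) + (mux * muy) * (F y - F xp))"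
      using r m by (intro mult_left_mono) auto
    thus ?thesis using iii' unfolding D_def by (simp add: algebra_simps)
  qed
  hence "(1 - mux) * (g y \<bullet> (zt - xs)) \<ge> (F xt - F xs) - mux * (F xp - F xs)"
    using D by (simp add: mult_le_cancel_left_pos)
  thus ?thesis unfolding tm1 y_def zt_def xt_def .
qed

lemma sum_ineq:
  fixes F :: "'v::real_inner \<Rightarrow> real" and zz :: "nat \<Rightarrow> 'v"
  assumes cv: "convex_on UNIV F"
    and tg: "\<And>x y. F y \<ge> F x + g x \<bullet> (y - x)"
    and m: "0 \<le> mux" "mux < 1" "0 \<le> muy" "muy < 1"
  shows "(1 - mux) * (\<Sum>t = 1..T. g (gpa_y mux muy zz t) \<bullet> (zz t - xs))
     \<ge> (1 - mux) * (\<Sum>t = 1..T. F (gpa_x mux zz t) - F xs)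
        + mux * (F (gpa_x mux zz T) - F xs) - mux * (F (gpa_x mux zz 0) - F xs)"
proof (induction T)
  case 0
  then show ?case by simp
next
  case (Suc T)
  have st: "(1 - mux) * (g (gpa_y mux muy zz (Suc T)) \<bullet> (zz (Suc T) - xs))
     \<ge> (F (gpa_x mux zz (Suc T)) - F xs) - mux * (F (gpa_x mux zz (Suc T - 1)) - F xs)"
    by (rule step_ineq[OF cv tg m]) simp
  show ?case using Suc.IH st by (simp add: algebra_simps)
qed

lemma pointwise_bound:
  fixes F :: "'v::real_inner \<Rightarrow> real" and zz :: "nat \<Rightarrow> 'v"
  assumes cv: "convex_on UNIV F"
    and tg: "\<And>x y. F y \<ge> F x + g x \<bullet> (y - x)"
    and mn: "\<And>x. F xs \<le> F x"
    and m: "0 \<le> mux" "mux < 1" "0 \<le> muy" "muy < 1"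
    and T: "T \<ge> 1"
  shows "F (gpa_xbar mux zz T) - F xs \<le>
     ((\<Sum>t = 1..T. g (gpa_y mux muy zz t) \<bullet> (zz t - xs)) + (mux / (1 - mux)) * (F (zz 1) - F xs)) / real T"
proof -
  define R where "R = (\<Sum>t = 1..T. g (gpa_y mux muy zz t) \<bullet> (zz t - xs))"
  define A where "A = (\<Sum>t = 1..T. F (gpa_x mux zz t) - F xs)"
  define a1 where "a1 = F (zz 1) - F xs"
  have x0: "gpa_x mux zz 0 = zz 1" by simp
  have aT: "F (gpa_x mux zz T) - F xs \<ge> 0" using mn by simp
  have "(1 - mux) * R \<ge> (1 - mux) * A + mux * (F (gpa_x mux zz T) - F xs) - mux * a1"
    using sum_ineq[OF cv tg m, where T=T and zz=zz and xs=xs] unfolding R_def A_def a1_def x0 .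
  moreover have "mux * (F (gpa_x mux zz T) - F xs) \<ge> 0" using aT m by simp
  ultimately have "(1 - mux) * A \<le> (1 - mux) * R + mux * a1" by linarith
  moreover have "(1 - mux) * (R + (mux / (1 - mux)) * a1) = (1 - mux) * R + mux * a1"
    using m by (simp add: distrib_left)
  ultimately have "(1 - mux) * A \<le> (1 - mux) * (R + (mux / (1 - mux)) * a1)" by simp
  hence AR: "A \<le> R + (mux / (1 - mux)) * a1" using m by (simp add: mult_le_cancel_left_pos)
  have Tpos: "real T > 0" using T by simp
  have "F (gpa_xbar mux zz T) = F (\<Sum>t = 1..T. (1 / real T) *\<^sub>R gpa_x mux zz t)"
    by (simp add: gpa_xbar_def scaleR_sum_right)
  also have "\<dots> \<le> (\<Sum>t = 1..T. (1 / real T) * F (gpa_x mux zz t))"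
    using T by (intro convex_on_sum[OF _ _ cv]) auto
  also have "\<dots> = (\<Sum>t = 1..T. F (gpa_x mux zz t)) / real T"
    by (simp add: sum_divide_distrib)
  finally have "F (gpa_xbar mux zz T) - F xs \<le> (\<Sum>t = 1..T. F (gpa_x mux zz t)) / real T - F xs" by simp
  also have "\<dots> = A / real T" using Tpos by (simp add: A_def sum_subtractf field_simps)
  also have "\<dots> \<le> (R + (mux / (1 - mux)) * a1) / real T" using AR Tpos by (simp add: divide_right_mono)
  finally show ?thesis unfolding R_def a1_def .
qed

theorem corollary1:
  fixes M :: "'w measure"
    and F :: "real ^ 'n \<Rightarrow> real"
    and gradF :: "real ^ 'n \<Rightarrow> real ^ 'n"
    and xs :: "real ^ 'n"
    and z :: "nat \<Rightarrow> 'w \<Rightarrow> real ^ 'n"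
    and mux muy :: real
  assumes "prob_space M"
    and "convex_on UNIV F"
    and "\<And>x. (F has_derivative (\<lambda>h. gradF x \<bullet> h)) (at x)"
    and "\<And>x. F xs \<le> F x"
    and "0 \<le> mux" "mux < 1" "0 \<le> muy" "muy < 1"
    and "\<And>t. z t \<in> borel_measurable M"
    and "integrable M (\<lambda>\<omega>. F (z 1 \<omega>) - F xs)"
    and "\<And>t. t \<ge> 1 \<Longrightarrow> integrable M
           (\<lambda>\<omega>. gradF (gpa_y mux muy (\<lambda>s. z s \<omega>) t) \<bullet> (z t \<omega> - xs))"
    and "(\<lambda>T. \<Sum>t = 1..T. \<integral>\<omega>. gradF (gpa_y mux muy (\<lambda>s. z s \<omega>) t) \<bullet> (z t \<omega> - xs) \<partial>M)
           \<in> O(\<lambda>T. sqrt (real T))"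
  shows "\<exists>C. \<forall>\<^sub>F T in sequentially.
           (\<integral>\<^sup>+\<omega>. ennreal (F (gpa_xbar mux (\<lambda>s. z s \<omega>) T) - F xs) \<partial>M)
             \<le> ennreal (C / sqrt (real T))"
  proof -
  note cv = assms(2)
  have tg: "\<And>x y. F y \<ge> F x + gradF x \<bullet> (y - x)"
    by (rule tangent_ineq[OF cv assms(3)])
  note mn = assms(4)
  note m = assms(5-8)
  define r where "r = (\<lambda>t \<omega>. gradF (gpa_y mux muy (\<lambda>s. z s \<omega>) t) \<bullet> (z t \<omega> - xs))"
  define a1 where "a1 = (\<lambda>\<omega>. F (z 1 \<omega>) - F xs)"
  define K where "K = mux / (1 - mux)"
  have K: "K \<ge> 0" using m by (simp add: K_def)
  have ia1: "integrable M a1" using assms(10) by (simp add: a1_def)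
  have ir: "\<And>t. t \<ge> 1 \<Longrightarrow> integrable M (r t)" using assms(11) by (simp add: r_def)
  define E1 where "E1 = integral\<^sup>L M a1"
  have E1: "E1 \<ge> 0" unfolding E1_def a1_def using mn by (intro integral_nonneg_AE) auto
  from assms(12) obtain c where c: "c > 0"
    "\<forall>\<^sub>F T in sequentially. norm (\<Sum>t = 1..T. integral\<^sup>L M (r t)) \<le> c * norm (sqrt (real T))"
    unfolding r_def by (elim landau_o.bigE)
  show ?thesis
  proof (rule exI[of _ "c + K * E1"])
    show "\<forall>\<^sub>F T in sequentially.
           (\<integral>\<^sup>+\<omega>. ennreal (F (gpa_xbar mux (\<lambda>s. z s \<omega>) T) - F xs) \<partial>M)
             \<le> ennreal ((c + K * E1) / sqrt (real T))"
      using c(2) eventually_ge_at_top[of "1::nat"]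
    proof eventually_elim
      case (elim T)
      hence T: "T \<ge> 1" and Sb: "\<bar>\<Sum>t = 1..T. integral\<^sup>L M (r t)\<bar> \<le> c * sqrt (real T)" by auto
      define f where "f = (\<lambda>\<omega>. ((\<Sum>t = 1..T. r t \<omega>) + K * a1 \<omega>) / real T)"
      have pw: "\<And>\<omega>. F (gpa_xbar mux (\<lambda>s. z s \<omega>) T) - F xs \<le> f \<omega>"
        unfolding f_def r_def a1_def K_def by (rule pointwise_bound[OF cv tg mn m T])
      have f0: "\<And>\<omega>. 0 \<le> f \<omega>" using pw mn by (meson diff_ge_0_iff_ge order_trans)
      have isum: "integrable M (\<lambda>\<omega>. \<Sum>t = 1..T. r t \<omega>)"
        by (rule Bochner_Integration.integrable_sum[where I="{1..T}" and M=M and f=r]) (use ir in auto)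
      have ika: "integrable M (\<lambda>\<omega>. K * a1 \<omega>)" using ia1 by (rule integrable_mult_right)
      have fi: "integrable M f" unfolding f_def
        using Bochner_Integration.integrable_add[OF isum ika] by (rule Bochner_Integration.integrable_divide)
      have If: "integral\<^sup>L M f = ((\<Sum>t = 1..T. integral\<^sup>L M (r t)) + K * E1) / real T"
        unfolding f_def E1_def using ir isum ika
        by (simp add: Bochner_Integration.integral_add Bochner_Integration.integral_sum)
      have sT: "sqrt (real T) \<ge> 1" using T by simp
      have Tss: "real T = sqrt (real T) * sqrt (real T)" by simp
      have sle: "sqrt (real T) \<le> real T"
        using mult_right_mono[OF sT, of "sqrt (real T)"] by simp
      have "integral\<^sup>L M f \<le> (c * sqrt (real T) + K * E1) / real T"
        unfolding If using Sb T by (intro divide_right_mono) auto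
      also have "\<dots> = c / sqrt (real T) + K * E1 / (sqrt (real T) * sqrt (real T))"
        using sT by (subst Tss) (simp add: field_simps)
      also have "\<dots> \<le> c / sqrt (real T) + K * E1 / sqrt (real T)"
        using sT sle K E1 by (intro add_left_mono divide_left_mono) (auto simp: mult_nonneg_nonneg)
      also have "\<dots> = (c + K * E1) / sqrt (real T)" by (simp add: add_divide_distrib)
      finally have Ifb: "integral\<^sup>L M f \<le> (c + K * E1) / sqrt (real T)" .
      have "(\<integral>\<^sup>+\<omega>. ennreal (F (gpa_xbar mux (\<lambda>s. z s \<omega>) T) - F xs) \<partial>M) \<le> (\<integral>\<^sup>+\<omega>. ennreal (f \<omega>) \<partial>M)"
        using pw by (intro nn_integral_mono ennreal_leI) auto
      also have "\<dots> = ennreal (integral\<^sup>L M f)"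
        using fi f0 by (intro nn_integral_eq_integral) auto
      also have "\<dots> \<le> ennreal ((c + K * E1) / sqrt (real T))"
        using Ifb by (rule ennreal_leI)
      finally show ?case .
    qed
  qed
qed

end
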